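(* Let $\mathcal{E}=[\theta,u]$ be an interval effect algebra that generates its ordered linear space, has an order-determining set of states, and is unrestricted. Let $\mathcal{I}$ be an operation from $\mathcal{E}$ to $\mathcal{E}$ and $a\in\mathcal{E}$ with $\mathcal{I}^*(u)=a$. Then the following are equivalent: (i) $a$ is $\mathcal{I}$-repeatable, i.e. $\mathcal{I}^*(a)=a$; (ii) $a[\mathcal{I}]a=a$; (iii) $a[\mathcal{I}]a'=\theta$; (iv) $a[\mathcal{I}]b=\theta$ for every $b\in\mathcal{E}$ with $a\perp b$; (v) $\mathcal{I}^*(b)\le\mathcal{I}^*(a)$ for all $b\in\mathcal{E}$; (vi) $\mathcal{I}(\mathcal{I}(s))(u)=\mathcal{I}(s)(u)$ for all $s\in\mathcal{S}(\mathcal{E})$, and $\mathcal{I}^*(u)=a$.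
   Context: Let $V$ be a real vector space with zero $\theta$ and $K\subseteq V$ a positive cone ($\mathbb{R}^+K\subseteq K$, $K+K\subseteq K$, $K\cap(-K)=\{\theta\}$), ordered by $x\le y$ iff $y-x\in K$. For $u\in K$, $u\ne\theta$, $\mathcal{E}=[\theta,u]=\{x\in K:x\le u\}$; for $a,b\in\mathcal{E}$, $a\perp b$ means $a+b\le u$; the complement of $a$ is $a'=u-a$. $\mathcal{E}$ generates $V$ means $K=\mathbb{R}^+\mathcal{E}$ and $V=K-K$. A state is $s\colon\mathcal{E}\to[0,1]$ with $s(u)=1$ and $s(a+b)=s(a)+s(b)$ whenever $a\perp b$; $\mathcal{S}(\mathcal{E})$ is the set of all states, assumed order-determining: $a\le b$ iff $s(a)\le s(b)$ for all $s$. Affine = preserves finite convex combinations. Unrestricted: every affine $f\colon\mathcal{S}(\mathcal{E})\to[0,1]$ is of the form $f(s)=s(c)$ for some $c\in\mathcal{E}$. A substate is $\lambda s$, $\lambda\in[0,1]$, $s\in\mathcal{S}(\mathcal{E})$. An operation on $\mathcal{E}$ is an affine map $\mathcal{I}$ from $\mathcal{S}(\mathcal{E})$ to substates on $\mathcal{E}$; it is extended to substates by $\mathcal{I}(\lambda s)=\lambda\mathcal{I}(s)$. Its dual $\mathcal{I}^*\colon\mathcal{E}\to\mathcal{E}$ is the unique affine map with $s[\mathcal{I}^*(b)]=\mathcal{I}(s)(b)$ for all $s\in\mathcal{S}(\mathcal{E})$, $b\in\mathcal{E}$. When $\mathcal{I}^*(u)=a$ ($\mathcal{I}$ measures $a$),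 the sequential product relative to $\mathcal{I}$ is $a[\mathcal{I}]b=\mathcal{I}^*(b)$ for $b\in\mathcal{E}$. *)

theory Defs
  imports Main "HOL.Real_Vector_Spaces"
begin

text \<open>Ordered real vector space (V = the whole type 'v) with positive cone K.\<close>

definition pos_cone :: "'v::real_vector set \<Rightarrow> bool" where
  "pos_cone K \<longleftrightarrow> (\<forall>r x. r \<ge> 0 \<longrightarrow> x \<in> K \<longrightarrow> r *\<^sub>R x \<in> K)
     \<and> (\<forall>x\<in>K. \<forall>y\<in>K. x + y \<in> K)
     \<and> K \<inter> uminus ` K = {0}"

definition cone_le :: "'v::real_vector set \<Rightarrow> 'v \<Rightarrow> 'v \<Rightarrow> bool" where
  "cone_le K x y \<longleftrightarrow> y - x \<in> K"

definition EA :: "'v::real_vector set \<Rightarrow> 'v \<Rightarrow> 'v set" where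
  "EA K u = {x \<in> K. cone_le K x u}"

definition perp :: "'v::real_vector set \<Rightarrow> 'v \<Rightarrow> 'v \<Rightarrow> 'v \<Rightarrow> bool" where
  "perp K u a b \<longleftrightarrow> cone_le K (a + b) u"

definition compl :: "'v::real_vector \<Rightarrow> 'v \<Rightarrow> 'v" where
  "compl u a = u - a"

definition generates :: "'v::real_vector set \<Rightarrow> 'v \<Rightarrow> bool" where
  "generates K u \<longleftrightarrow> K = {r *\<^sub>R x | r x. r \<ge> 0 \<and> x \<in> EA K u}
     \<and> (UNIV :: 'v set) = {x - y | x y. x \<in> K \<and> y \<in> K}"

text \<open>States: functions on E (extended by 0 outside E).\<close>
definition is_state :: "'v::real_vector set \<Rightarrow> 'v \<Rightarrow> ('v \<Rightarrow> real) \<Rightarrow> bool" where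
  "is_state K u s \<longleftrightarrow> (\<forall>x. x \<notin> EA K u \<longrightarrow> s x = 0)
     \<and> (\<forall>x\<in>EA K u. 0 \<le> s x \<and> s x \<le> 1)
     \<and> s u = 1
     \<and> (\<forall>a\<in>EA K u. \<forall>b\<in>EA K u. perp K u a b \<longrightarrow> s (a + b) = s a + s b)"

definition States :: "'v::real_vector set \<Rightarrow> 'v \<Rightarrow> ('v \<Rightarrow> real) set" where
  "States K u = {s. is_state K u s}"

definition order_determining :: "'v::real_vector set \<Rightarrow> 'v \<Rightarrow> bool" where
  "order_determining K u \<longleftrightarrow> (\<forall>a\<in>EA K u. \<forall>b\<in>EA K u.
      cone_le K a b \<longleftrightarrow> (\<forall>s\<in>States K u. s a \<le> s b))"

definition substates :: "'v::real_vector set \<Rightarrow> 'v \<Rightarrow> ('v \<Rightarrow> real) set" where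
  "substates K u = {(\<lambda>x. l * s x) | l s. 0 \<le> l \<and> l \<le> 1 \<and> s \<in> States K u}"

text \<open>Affine = preserves convex combinations (binary ones; for maps on the convex
  set of states this is equivalent to preserving all finite convex combinations).\<close>
definition affine_real_on_states :: "'v::real_vector set \<Rightarrow> 'v \<Rightarrow> (('v \<Rightarrow> real) \<Rightarrow> real) \<Rightarrow> bool" where
  "affine_real_on_states K u f \<longleftrightarrow> (\<forall>s\<in>States K u. \<forall>t\<in>States K u. \<forall>l::real. 0 \<le> l \<longrightarrow> l \<le> 1 \<longrightarrow>
      f (\<lambda>x. l * s x + (1 - l) * t x) = l * f s + (1 - l) * f t)"

definition unrestricted :: "'v::real_vector set \<Rightarrow> 'v \<Rightarrow> bool" where
  "unrestricted K u \<longleftrightarrow> (\<forall>f. affine_real_on_states K u f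
       \<longrightarrow> (\<forall>s\<in>States K u. 0 \<le> f s \<and> f s \<le> 1)
       \<longrightarrow> (\<exists>c\<in>EA K u. \<forall>s\<in>States K u. f s = s c))"

definition is_operation :: "'v::real_vector set \<Rightarrow> 'v \<Rightarrow> (('v \<Rightarrow> real) \<Rightarrow> ('v \<Rightarrow> real)) \<Rightarrow> bool" where
  "is_operation K u I \<longleftrightarrow> (\<forall>s\<in>States K u. I s \<in> substates K u)
     \<and> (\<forall>s\<in>States K u. \<forall>t\<in>States K u. \<forall>l::real. 0 \<le> l \<longrightarrow> l \<le> 1 \<longrightarrow>
          I (\<lambda>x. l * s x + (1 - l) * t x) = (\<lambda>x. l * I s x + (1 - l) * I t x))"

text \<open>Extension of an operation to substates: I(l s) = l I(s). For a substate f = l s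
  one has l = f u, and s = f / f u when l > 0.\<close>
definition op_ext :: "'v::real_vector \<Rightarrow> (('v \<Rightarrow> real) \<Rightarrow> ('v \<Rightarrow> real)) \<Rightarrow> ('v \<Rightarrow> real) \<Rightarrow> ('v \<Rightarrow> real)" where
  "op_ext u I f = (if f u = 0 then (\<lambda>_. 0) else (\<lambda>b. f u * I (\<lambda>x. f x / f u) b))"

text \<open>The dual I*: I*(b) is the (unique, by order-determination) c in E with s(c) = I(s)(b).\<close>
definition op_dual :: "'v::real_vector set \<Rightarrow> 'v \<Rightarrow> (('v \<Rightarrow> real) \<Rightarrow> ('v \<Rightarrow> real)) \<Rightarrow> 'v \<Rightarrow> 'v" where
  "op_dual K u I b = (THE c. c \<in> EA K u \<and> (\<forall>s\<in>States K u. s c = I s b))"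

text \<open>Sequential product a[I]b = I*(b) (meaningful when I*(u) = a).\<close>
definition seq_prod :: "'v::real_vector set \<Rightarrow> 'v \<Rightarrow> 'v \<Rightarrow> (('v \<Rightarrow> real) \<Rightarrow> ('v \<Rightarrow> real)) \<Rightarrow> 'v \<Rightarrow> 'v" where
  "seq_prod K u a I b = op_dual K u I b"

end

theory Submission
  imports Defs
begin

context
  fixes K :: "'v::real_vector set" and u :: 'v
    and I :: "('v \<Rightarrow> real) \<Rightarrow> ('v \<Rightarrow> real)"
  assumes pc: "pos_cone K" and uK: "u \<in> K" and un0: "u \<noteq> 0"
    and od: "order_determining K u" and ur: "unrestricted K u"
    and op: "is_operation K u I"
begin

lemma zeroK: "0 \<in> K"
  using pc unfolding pos_cone_def by blast

lemma antis: "x \<in> K \<Longrightarrow> -x \<in> K \<Longrightarrow> x = 0"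
proof -
  assume "x \<in> K" "-x \<in> K"
  have "x = - (-x)" by simp
  from image_eqI[where f=uminus, OF this \<open>-x \<in> K\<close>] have "x \<in> uminus ` K" .
  with \<open>x \<in> K\<close> have "x \<in> K \<inter> uminus ` K" by (rule IntI)
  with pc show ?thesis unfolding pos_cone_def by simp
qed

lemma addK: "x \<in> K \<Longrightarrow> y \<in> K \<Longrightarrow> x + y \<in> K"
  using pc unfolding pos_cone_def by blast

lemma uE: "u \<in> EA K u"
  using uK zeroK by (simp add: EA_def cone_le_def)

lemma zE: "0 \<in> EA K u"
  using uK zeroK by (simp add: EA_def cone_le_def)

lemma eq_by_states:
  assumes "c \<in> EA K u" "d \<in> EA K u" "\<And>s. s \<in> States K u \<Longrightarrow> s c = s d"
  shows "c = d"
proof -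
  have "\<forall>s\<in>States K u. s c \<le> s d \<and> s d \<le> s c"
  proof
    fix s assume "s \<in> States K u"
    then have "s c = s d" by (rule assms(3))
    then show "s c \<le> s d \<and> s d \<le> s c" by simp
  qed
  then have "\<forall>s\<in>States K u. s c \<le> s d" "\<forall>s\<in>States K u. s d \<le> s c" by blast+
  then have "cone_le K c d" "cone_le K d c" using od assms(1,2) unfolding order_determining_def by blast+
  then have "d - c \<in> K" "-(d - c) \<in> K" by (auto simp: cone_le_def)
  then show ?thesis using antis[of "d - c"] by simp
qed

lemma Is_form:
  assumes "s \<in> States K u"
  obtains l t where "0 \<le> l" "l \<le> 1" "t \<in> States K u" "I s = (\<lambda>x. l * t x)"
  using op assms unfolding is_operation_def substates_def by blast

lemma state_props:
  assumes "t \<in> States K u"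
  shows "\<And>x. x \<in> EA K u \<Longrightarrow> 0 \<le> t x \<and> t x \<le> 1" "t u = 1"
    "\<And>a b. a \<in> EA K u \<Longrightarrow> b \<in> EA K u \<Longrightarrow> perp K u a b \<Longrightarrow> t (a + b) = t a + t b"
  using assms unfolding States_def is_state_def by auto

lemma Is_add:
  assumes "s \<in> States K u" "b \<in> EA K u" "c \<in> EA K u" "perp K u b c"
  shows "I s (b + c) = I s b + I s c"
proof -
  obtain l t where "I s = (\<lambda>x. l * t x)" "t \<in> States K u" using Is_form assms(1) by blast
  then show ?thesis using state_props(3)[OF \<open>t \<in> States K u\<close> assms(2-4)] by (simp add: algebra_simps)
qed

lemma Is_range:
  assumes "s \<in> States K u" "b \<in> EA K u"
  shows "0 \<le> I s b \<and> I s b \<le> 1"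
proof -
  obtain l t where "0 \<le> l" "l \<le> 1" "I s = (\<lambda>x. l * t x)" "t \<in> States K u" using Is_form assms(1) by blast
  then show ?thesis using state_props(1)[OF \<open>t \<in> States K u\<close> assms(2)]
    by (simp add: mult_le_one)
qed

lemma Is_mono:
  assumes "s \<in> States K u" "b \<in> EA K u" "c \<in> EA K u" "cone_le K b c"
  shows "I s b \<le> I s c"
proof -
  have 1: "c - b \<in> K" using assms(4) by (simp add: cone_le_def)
  have "u - c \<in> K" "b \<in> K" using assms(2,3) by (simp_all add: EA_def cone_le_def)
  then have "(u - c) + b \<in> K" by (rule addK)
  then have "u - (c - b) \<in> K" by (simp add: algebra_simps)
  then have cb: "c - b \<in> EA K u" using 1 by (simp add: EA_def cone_le_def)
  have "perp K u b (c - b)" using assms(3) by (simp add: perp_def EA_def)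
  then have "I s c = I s b + I s (c - b)" using Is_add[OF assms(1,2) cb] by simp
  then show ?thesis using Is_range[OF assms(1) cb] by simp
qed

lemma dual_spec:
  assumes "b \<in> EA K u"
  shows "op_dual K u I b \<in> EA K u \<and> (\<forall>s\<in>States K u. s (op_dual K u I b) = I s b)"
proof -
  have aff: "affine_real_on_states K u (\<lambda>s. I s b)"
    using op unfolding affine_real_on_states_def is_operation_def by simp
  have "\<forall>s\<in>States K u. 0 \<le> I s b \<and> I s b \<le> 1" using Is_range assms by blast
  then obtain c where c: "c \<in> EA K u" "\<forall>s\<in>States K u. I s b = s c"
    using ur aff unfolding unrestricted_def by blast
  have "\<exists>!c. c \<in> EA K u \<and> (\<forall>s\<in>States K u. s c = I s b)"
  proof
    show "c \<in> EA K u \<and> (\<forall>s\<in>States K u. s c = I s b)" using c by simp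
    fix d assume "d \<in> EA K u \<and> (\<forall>s\<in>States K u. s d = I s b)"
    then show "d = c" using eq_by_states[of d c] c by simp
  qed
  then show ?thesis unfolding op_dual_def by (rule theI')
qed

lemma dual_unique:
  assumes "b \<in> EA K u" "c \<in> EA K u" "\<And>s. s \<in> States K u \<Longrightarrow> s c = I s b"
  shows "op_dual K u I b = c"
  using eq_by_states[of "op_dual K u I b" c] dual_spec[OF assms(1)] assms(2,3) by simp

lemma s0: "s \<in> States K u \<Longrightarrow> s 0 = 0"
  using state_props(3)[of s 0 0] zE zeroK uK by (simp add: perp_def cone_le_def)

end

theorem theorem3p3:
  fixes K :: "'v::real_vector set" and u a :: 'v
    and I :: "('v \<Rightarrow> real) \<Rightarrow> ('v \<Rightarrow> real)"
  assumes "pos_cone K" and "u \<in> K" and "u \<noteq> 0"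
    and "generates K u" and "order_determining K u" and "unrestricted K u"
    and "is_operation K u I"
    and "a \<in> EA K u" and "op_dual K u I u = a"
  shows "(op_dual K u I a = a \<longleftrightarrow> seq_prod K u a I a = a)
       \<and> (op_dual K u I a = a \<longleftrightarrow> seq_prod K u a I (compl u a) = 0)
       \<and> (op_dual K u I a = a \<longleftrightarrow>
            (\<forall>b\<in>EA K u. perp K u a b \<longrightarrow> seq_prod K u a I b = 0))
       \<and> (op_dual K u I a = a \<longleftrightarrow>
            (\<forall>b\<in>EA K u. cone_le K (op_dual K u I b) (op_dual K u I a)))
       \<and> (op_dual K u I a = a \<longleftrightarrow>
            ((\<forall>s\<in>States K u. op_ext u I (I s) u = I s u) \<and> op_dual K u I u = a))"
proof -
  note H = assms(1,2,3,5,6,7)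
  let ?D = "op_dual K u I"
  have aE: "a \<in> EA K u" by fact
  have Da: "?D a \<in> EA K u" "\<And>s. s \<in> States K u \<Longrightarrow> s (?D a) = I s a"
    using dual_spec[OF H aE] by auto
  have Du: "\<And>s. s \<in> States K u \<Longrightarrow> I s u = s a"
    using dual_spec[OF H uE[OF H]] assms(9) by auto
  have iff_states: "?D a = a \<longleftrightarrow> (\<forall>s\<in>States K u. I s a = s a)"
    using Da eq_by_states[OF H Da(1) aE] by auto
  have caE: "u - a \<in> EA K u" using aE by (simp add: EA_def cone_le_def)
  have pa: "perp K u a (u - a)" using zeroK[OF H] by (simp add: perp_def cone_le_def)
  have split: "\<And>s. s \<in> States K u \<Longrightarrow> I s u = I s a + I s (u - a)"
    using Is_add[OF H _ aE caE pa] by simp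
  have iii: "?D a = a \<longleftrightarrow> ?D (u - a) = 0"
  proof
    assume "?D a = a"
    show "?D (u - a) = 0"
    proof (rule dual_unique[OF H caE zE[OF H]])
      fix s assume sS: "s \<in> States K u"
      have "I s (u - a) = I s u - I s a" using split[OF sS] by simp
      also have "\<dots> = 0" using Du[OF sS] Da(2)[OF sS] \<open>?D a = a\<close> by simp
      finally show "s 0 = I s (u - a)" using s0[OF H sS] by simp
    qed
  next
    assume h: "?D (u - a) = 0"
    have "\<forall>s\<in>States K u. I s a = s a"
    proof
      fix s assume sS: "s \<in> States K u"
      have "I s (u - a) = 0" using dual_spec[OF H caE] h s0[OF H sS] sS by metis
      then show "I s a = s a" using split[OF sS] Du[OF sS] by simp
    qed
    then show "?D a = a" using iff_states by blast
  qed
  have iv: "?D (u - a) = 0 \<longleftrightarrow> (\<forall>b\<in>EA K u. perp K u a b \<longrightarrow> ?D b = 0)"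
  proof
    assume h: "?D (u - a) = 0"
    show "\<forall>b\<in>EA K u. perp K u a b \<longrightarrow> ?D b = 0"
    proof (intro ballI impI)
      fix b assume bE: "b \<in> EA K u" and "perp K u a b"
      then have "cone_le K b (u - a)" by (simp add: perp_def cone_le_def algebra_simps)
      then have "\<And>s. s \<in> States K u \<Longrightarrow> I s b \<le> I s (u - a)"
        using Is_mono[OF H _ bE caE] by blast
      moreover have "\<And>s. s \<in> States K u \<Longrightarrow> I s (u - a) = 0"
        using h dual_spec[OF H caE] s0[OF H] by metis
      ultimately have "\<And>s. s \<in> States K u \<Longrightarrow> s 0 = I s b"
        using s0[OF H] Is_range[OF H _ bE] by (metis order_antisym)
      then show "?D b = 0" using dual_unique[OF H bE zE[OF H]] by blast
    qed
  next
    assume "\<forall>b\<in>EA K u. perp K u a b \<longrightarrow> ?D b = 0"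
    then show "?D (u - a) = 0" using caE pa by blast
  qed
  have v: "?D a = a \<longleftrightarrow> (\<forall>b\<in>EA K u. cone_le K (?D b) (?D a))"
  proof
    assume h: "?D a = a"
    show "\<forall>b\<in>EA K u. cone_le K (?D b) (?D a)"
    proof
      fix b assume bE: "b \<in> EA K u"
      have "cone_le K b u" using bE by (simp add: EA_def)
      then have "\<forall>s\<in>States K u. s (?D b) \<le> s (?D a)"
        using Is_mono[OF H _ bE uE[OF H]] dual_spec[OF H bE] Du Da(2) by (simp add: h)
      then show "cone_le K (?D b) (?D a)"
        using assms(5) dual_spec[OF H bE] Da(1) unfolding order_determining_def by blast
    qed
  next
    assume h: "\<forall>b\<in>EA K u. cone_le K (?D b) (?D a)"
    have "cone_le K (?D u) (?D a)" using h uE[OF H] by blast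
    then have 1: "\<forall>s\<in>States K u. s a \<le> s (?D a)"
      using assms(5,9) aE Da(1) unfolding order_determining_def by blast
    have "cone_le K a u" using aE by (simp add: EA_def)
    then have 2: "\<forall>s\<in>States K u. I s a \<le> s a"
      using Is_mono[OF H _ aE uE[OF H]] Du by simp
    have "\<forall>s\<in>States K u. I s a = s a"
    proof
      fix s assume sS: "s \<in> States K u"
      show "I s a = s a" using 1 sS 2 Da(2)[OF sS] by force
    qed
    then show "?D a = a" using iff_states by blast
  qed
  have ext: "\<And>s. s \<in> States K u \<Longrightarrow> op_ext u I (I s) u = I s a"
  proof -
    fix s assume sS: "s \<in> States K u"
    obtain l t where lt: "0 \<le> l" "l \<le> 1" "t \<in> States K u" "I s = (\<lambda>x. l * t x)"
      using Is_form[OF H sS] by blast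
    have tu: "t u = 1" using state_props(2)[OF H lt(3)] .
    show "op_ext u I (I s) u = I s a"
    proof (cases "l = 0")
      case True then show ?thesis using lt(4) by (simp add: op_ext_def)
    next
      case False
      then have "(\<lambda>x. I s x / I s u) = t" using lt(4) tu by auto
      then have "op_ext u I (I s) u = l * I t u" using lt(4) tu False by (simp add: op_ext_def)
      also have "\<dots> = l * t a" using Du lt(3) by simp
      finally show ?thesis using lt(4) by simp
    qed
  qed
  have vi: "?D a = a \<longleftrightarrow> (\<forall>s\<in>States K u. op_ext u I (I s) u = I s u)"
    using ext Du iff_states by auto
  have iv': "?D a = a \<longleftrightarrow> (\<forall>b\<in>EA K u. perp K u a b \<longrightarrow> ?D b = 0)"
    using iii iv by (rule trans)
  have vi': "?D a = a \<longleftrightarrow> ((\<forall>s\<in>States K u. op_ext u I (I s) u = I s u) \<and> ?D u = a)"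
    using vi assms(9) by simp
  show ?thesis unfolding seq_prod_def compl_def
    using iii iv' v vi' by (intro conjI) simp_all
qed

end
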